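(* Let $K\in\mathbb{Z}_{>0}$ and let $\{\mathcal{N}_j\}_{j=1}^K$ be a set of $K$ known $n$-qubit quantum channels. Let $\ell:[0,1]\to\mathbb{R}$ be convex and $L$-Lipschitz. There exists an online learning strategy that, when presented sequentially with channel test operators $E_{A,B}^{(t)}$, $t\in\{1,\dots,T\}$, and associated losses $\ell_t(\cdot)=\ell((\cdot)-b_t)$ with $b_t\in[0,1]$, outputs Choi matrix hypotheses of the form $N_{A,B}^{(t)}=\sum_{j=1}^K p_j^{(t)}C(\mathcal{N}_j)$ with $(p_1^{(t)},\dots,p_K^{(t)})$ a probability vector, such that \[ \sum_{t=1}^T \ell_t\big(\mathrm{Tr}[E_{A,B}^{(t)}N_{A,B}^{(t)}]\big) - \sum_{t=1}^T \ell_t\big(\mathrm{Tr}[E_{A,B}^{(t)}C_{A,B}^{\mathcal{N}}]\big) = \mathcal{O}\big(L\sqrt{T\log K}\big) \] for every $\mathcal{N}$ in the convex hull of $\{\mathcal{N}_j\}_{j=1}^K$.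
   Context: $A,B$ are $n$-qubit systems, $d=2^n$. The Choi matrix of a linear map $\mathcal{N}$ is $C(\mathcal{N})=C^{\mathcal{N}}_{A,B}=\sum_{i,j=0}^{d-1}|i\rangle\langle j|\otimes\mathcal{N}(|i\rangle\langle j|)$. A channel test operator is $E_{A,B}\geq0$ with $E_{A,B}\leq\sigma_A\otimes\mathbb{1}_B$ for some density operator $\sigma_A$. In round $t$ the adversary presents $E^{(t)}$, the learner outputs $N^{(t)}$ (depending only on past information) and predicts $\mathrm{Tr}[E^{(t)}N^{(t)}]$, then $b_t$ is revealed. *)

theory Defs
  imports "HOL-Analysis.Analysis" "Jordan_Normal_Form.Matrix"
begin

definition mtrace :: "complex mat \<Rightarrow> complex" where
  "mtrace A = (\<Sum>i<dim_row A. A $$ (i, i))"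

definition msum :: "nat \<Rightarrow> ('i \<Rightarrow> complex mat) \<Rightarrow> 'i list \<Rightarrow> complex mat" where
  "msum m f xs = foldr (\<lambda>x acc. f x + acc) xs (0\<^sub>m m m)"

text \<open>Kronecker (tensor) product; the first factor is the outer (A) system.\<close>
definition kron :: "complex mat \<Rightarrow> complex mat \<Rightarrow> complex mat" where
  "kron A B = mat (dim_row A * dim_row B) (dim_col A * dim_col B)
     (\<lambda>(i, j). A $$ (i div dim_row B, j div dim_col B) * B $$ (i mod dim_row B, j mod dim_col B))"

definition psd :: "nat \<Rightarrow> complex mat \<Rightarrow> bool" where
  "psd m A \<longleftrightarrow> A \<in> carrier_mat m m \<and>
     (\<forall>v \<in> carrier_vec m. Im (conjugate v \<bullet> (A *\<^sub>v v)) = 0 \<and> 0 \<le> Re (conjugate v \<bullet> (A *\<^sub>v v)))"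

definition loewner_le :: "nat \<Rightarrow> complex mat \<Rightarrow> complex mat \<Rightarrow> bool" where
  "loewner_le m A B \<longleftrightarrow> A \<in> carrier_mat m m \<and> B \<in> carrier_mat m m \<and> psd m (B - A)"

definition density_op :: "nat \<Rightarrow> complex mat \<Rightarrow> bool" where
  "density_op m \<sigma> \<longleftrightarrow> psd m \<sigma> \<and> mtrace \<sigma> = 1"

definition ketbra :: "nat \<Rightarrow> nat \<Rightarrow> nat \<Rightarrow> complex mat" where
  "ketbra d i j = mat d d (\<lambda>(a, b). if a = i \<and> b = j then 1 else 0)"

text \<open>Linear maps on d x d matrices (only their action on d x d matrices matters).\<close>
definition linear_map_on :: "nat \<Rightarrow> (complex mat \<Rightarrow> complex mat) \<Rightarrow> bool" where
  "linear_map_on d \<Phi> \<longleftrightarrow>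
     (\<forall>X \<in> carrier_mat d d. \<Phi> X \<in> carrier_mat d d) \<and>
     (\<forall>X \<in> carrier_mat d d. \<forall>Y \<in> carrier_mat d d. \<Phi> (X + Y) = \<Phi> X + \<Phi> Y) \<and>
     (\<forall>c. \<forall>X \<in> carrier_mat d d. \<Phi> (c \<cdot>\<^sub>m X) = c \<cdot>\<^sub>m \<Phi> X)"

text \<open>(id_m \<otimes> \<Phi>) applied to an (m d) x (m d) matrix: \<Phi> acts on each d x d block.\<close>
definition id_tensor :: "nat \<Rightarrow> nat \<Rightarrow> (complex mat \<Rightarrow> complex mat) \<Rightarrow> complex mat \<Rightarrow> complex mat" where
  "id_tensor m d \<Phi> X = mat (m * d) (m * d)
     (\<lambda>(i, j). \<Phi> (mat d d (\<lambda>(a, b). X $$ ((i div d) * d + a, (j div d) * d + b))) $$ (i mod d, j mod d))"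

definition completely_positive :: "nat \<Rightarrow> (complex mat \<Rightarrow> complex mat) \<Rightarrow> bool" where
  "completely_positive d \<Phi> \<longleftrightarrow>
     (\<forall>m X. psd (m * d) X \<longrightarrow> psd (m * d) (id_tensor m d \<Phi> X))"

definition trace_preserving :: "nat \<Rightarrow> (complex mat \<Rightarrow> complex mat) \<Rightarrow> bool" where
  "trace_preserving d \<Phi> \<longleftrightarrow> (\<forall>X \<in> carrier_mat d d. mtrace (\<Phi> X) = mtrace X)"

definition quantum_channel :: "nat \<Rightarrow> (complex mat \<Rightarrow> complex mat) \<Rightarrow> bool" where
  "quantum_channel n \<Phi> \<longleftrightarrow> linear_map_on (2 ^ n) \<Phi> \<and>
     completely_positive (2 ^ n) \<Phi> \<and> trace_preserving (2 ^ n) \<Phi>"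

definition choi :: "nat \<Rightarrow> (complex mat \<Rightarrow> complex mat) \<Rightarrow> complex mat" where
  "choi d \<Phi> = msum (d * d) (\<lambda>(i, j). kron (ketbra d i j) (\<Phi> (ketbra d i j)))
                 (List.product [0..<d] [0..<d])"

definition channel_test_op :: "nat \<Rightarrow> complex mat \<Rightarrow> bool" where
  "channel_test_op d E \<longleftrightarrow> psd (d * d) E \<and>
     (\<exists>\<sigma>. density_op d \<sigma> \<and> loewner_le (d * d) E (kron \<sigma> (1\<^sub>m d)))"

definition prob_vec :: "nat \<Rightarrow> (nat \<Rightarrow> real) \<Rightarrow> bool" where
  "prob_vec K p \<longleftrightarrow> (\<forall>j<K. 0 \<le> p j) \<and> (\<Sum>j<K. p j) = 1"

definition in_channel_hull :: "nat \<Rightarrow> nat \<Rightarrow> (nat \<Rightarrow> complex mat \<Rightarrow> complex mat)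
     \<Rightarrow> (complex mat \<Rightarrow> complex mat) \<Rightarrow> bool" where
  "in_channel_hull d K Ns \<Phi> \<longleftrightarrow> (\<exists>q. prob_vec K q \<and>
     (\<forall>X \<in> carrier_mat d d. \<Phi> X = msum d (\<lambda>j. complex_of_real (q j) \<cdot>\<^sub>m Ns j X) [0..<K]))"

definition mixture_choi :: "nat \<Rightarrow> nat \<Rightarrow> (nat \<Rightarrow> complex mat \<Rightarrow> complex mat)
     \<Rightarrow> (nat \<Rightarrow> real) \<Rightarrow> complex mat" where
  "mixture_choi d K Ns p = msum (d * d) (\<lambda>j. complex_of_real (p j) \<cdot>\<^sub>m choi d (Ns j)) [0..<K]"

end

theory Submission
  imports Defs
begin

definition subg :: "(real \<Rightarrow> real) \<Rightarrow> real \<Rightarrow> real \<Rightarrow> real" where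
  "subg f L x = (if x \<le> -1 then -L else Sup ((\<lambda>y. (f x - f y) / (x - y)) ` {-1..<x}))"

lemma subg:
  assumes cvx: "convex_on {-1..1} f" and lip: "L-lipschitz_on {-1..1} f"
    and x: "x \<in> {-1..1}" and z: "z \<in> {-1..1}"
  shows "f x + subg f L x * (z - x) \<le> f z" and "\<bar>subg f L x\<bar> \<le> L"
proof -
  have L0: "0 \<le> L" using lip by (simp add: lipschitz_on_def)
  have lipd: "\<And>u v. u \<in> {-1..1} \<Longrightarrow> v \<in> {-1..1} \<Longrightarrow> \<bar>f u - f v\<bar> \<le> L * \<bar>u - v\<bar>"
    using lip by (auto simp: lipschitz_on_def dist_real_def)
  have "(f x + subg f L x * (z - x) \<le> f z) \<and> \<bar>subg f L x\<bar> \<le> L"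
  proof (cases "x \<le> -1")
    case True
    then have xe: "x = -1" using x by auto
    have "\<bar>f z - f x\<bar> \<le> L * \<bar>z - x\<bar>" using lipd x z by auto
    then show ?thesis using True xe z L0 by (auto simp: subg_def abs_if split: if_splits)
  next
    case False
    define Sl where "Sl = (\<lambda>y. (f x - f y) / (x - y)) ` {-1..<x}"
    have g: "subg f L x = Sup Sl" using False by (simp add: subg_def Sl_def)
    have ne: "Sl \<noteq> {}" using False by (auto simp: Sl_def)
    have slb: "\<And>s. s \<in> Sl \<Longrightarrow> \<bar>s\<bar> \<le> L"
    proof -
      fix s assume "s \<in> Sl"
      then obtain y where y: "y \<in> {-1..<x}" "s = (f x - f y) / (x - y)" by (auto simp: Sl_def)
      have "\<bar>f x - f y\<bar> \<le> L * \<bar>x - y\<bar>" using lipd[of x y] x y(1) by auto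
      moreover have "x - y > 0" using y by auto
      ultimately show "\<bar>s\<bar> \<le> L" using y(2) by (simp add: abs_div pos_divide_le_eq)
    qed
    have bdd: "bdd_above Sl" using slb by (meson abs_le_D1 bdd_above.I)
    have up: "\<And>s. s \<in> Sl \<Longrightarrow> s \<le> Sup Sl" using bdd by (simp add: cSup_upper)
    have gle: "Sup Sl \<le> L" using ne slb by (meson abs_le_D1 cSup_least)
    obtain s0 where s0: "s0 \<in> Sl" using ne by auto
    have gge: "-L \<le> Sup Sl" using up[OF s0] slb[OF s0] by auto
    have main: "f x + Sup Sl * (z - x) \<le> f z"
    proof (cases z x rule: linorder_cases)
      case less
      have "(f x - f z) / (x - z) \<in> Sl" using less z by (auto simp: Sl_def)
      then have "(f x - f z) / (x - z) \<le> Sup Sl" by (rule up)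
      then have "f x - f z \<le> Sup Sl * (x - z)" using less by (simp add: divide_le_eq)
      then show ?thesis by (simp add: algebra_simps)
    next
      case equal then show ?thesis by simp
    next
      case greater
      have "Sup Sl \<le> (f x - f z) / (x - z)"
      proof (rule cSup_least[OF ne])
        fix s assume "s \<in> Sl"
        then obtain y where y: "y \<in> {-1..<x}" "s = (f x - f y) / (x - y)" by (auto simp: Sl_def)
        have "(f y - f x) / (y - x) \<le> (f y - f z) / (y - z)"
          using convex_on_slope_le(1)[OF cvx, of y z x] y z greater by auto
        moreover have "(f y - f z) / (y - z) \<le> (f x - f z) / (x - z)"
          using convex_on_slope_le(2)[OF cvx, of y z x] y z greater by auto
        moreover have "(f y - f x) / (y - x) = s" using y(2) by (metis minus_diff_eq minus_divide_divide)
        ultimately show "s \<le> (f x - f z) / (x - z)" by simp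
      qed
      moreover have "(f x - f z) / (x - z) = (f z - f x) / (z - x)"
        by (metis minus_diff_eq minus_divide_divide)
      ultimately have "Sup Sl \<le> (f z - f x) / (z - x)" by simp
      then have "Sup Sl * (z - x) \<le> f z - f x" using greater
        by (simp add: pos_le_divide_eq)
      then show ?thesis by simp
    qed
    show ?thesis using main gle gge g by auto
  qed
  then show "f x + subg f L x * (z - x) \<le> f z" and "\<bar>subg f L x\<bar> \<le> L" by auto
qed

lemma exp_bound2:
  fixes y :: real assumes "\<bar>y\<bar> \<le> 1" shows "exp y \<le> 1 + y + y\<^sup>2"
proof (cases "0 \<le> y")
  case True then show ?thesis using exp_bound assms by auto
next
  case False
  have "1 - y \<le> exp (-y)" using exp_ge_add_one_self[of "-y"] by simp
  then have "exp y * (1 - y) \<le> exp y * exp (-y)" by (simp add: mult_left_mono)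
  also have "\<dots> = 1" by (simp add: exp_minus)
  finally have "exp y * (1 - y) \<le> 1" .
  moreover have "1 \<le> (1 + y + y\<^sup>2) * (1 - y)"
  proof -
    have e: "(1 + y + y\<^sup>2) * (1 - y) = 1 - y * y\<^sup>2" by (simp add: power2_eq_square algebra_simps)
    have "y * y\<^sup>2 \<le> 0" using False by (simp add: mult_nonpos_nonneg)
    then show ?thesis unfolding e by simp
  qed
  ultimately have "exp y * (1 - y) \<le> (1 + y + y\<^sup>2) * (1 - y)" by linarith
  then show ?thesis using False by (simp add: mult_le_cancel_right)
qed

definition hw :: "nat \<Rightarrow> real \<Rightarrow> (nat \<Rightarrow> real) \<Rightarrow> nat \<Rightarrow> real" where
  "hw K \<eta> S j = exp (- \<eta> * S j) / (\<Sum>i<K. exp (- \<eta> * S i))"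

definition hupd :: "nat \<Rightarrow> real \<Rightarrow> (real \<Rightarrow> real) \<Rightarrow> real \<Rightarrow> ('e \<Rightarrow> nat \<Rightarrow> real)
    \<Rightarrow> (nat \<Rightarrow> real) \<Rightarrow> 'e \<times> real \<Rightarrow> nat \<Rightarrow> real" where
  "hupd K \<eta> f L A S eb j =
     S j + subg f L ((\<Sum>i<K. hw K \<eta> S i * A (fst eb) i) - snd eb) * A (fst eb) j"

definition hS :: "nat \<Rightarrow> real \<Rightarrow> (real \<Rightarrow> real) \<Rightarrow> real \<Rightarrow> ('e \<Rightarrow> nat \<Rightarrow> real)
    \<Rightarrow> ('e \<times> real) list \<Rightarrow> nat \<Rightarrow> real" where
  "hS K \<eta> f L A h = foldl (hupd K \<eta> f L A) (\<lambda>_. 0) h"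

lemma hw_prob: assumes "0 < K" shows "prob_vec K (hw K \<eta> S)"
proof -
  have pos: "0 < (\<Sum>i<K. exp (- \<eta> * S i))"
    using assms by (intro sum_pos) auto
  have "(\<Sum>j<K. hw K \<eta> S j) = (\<Sum>j<K. exp (- \<eta> * S j)) / (\<Sum>i<K. exp (- \<eta> * S i))"
    unfolding hw_def by (rule sum_divide_distrib[symmetric])
  also have "\<dots> = 1" using pos by simp
  finally show ?thesis using pos by (auto simp: prob_vec_def hw_def)
qed

lemma prob_avg01:
  assumes "prob_vec K p" "\<And>j. j < K \<Longrightarrow> 0 \<le> a j \<and> a j \<le> 1"
  shows "0 \<le> (\<Sum>j<K. p j * a j) \<and> (\<Sum>j<K. p j * a j) \<le> 1"
proof -
  have "0 \<le> (\<Sum>j<K. p j * a j)" using assms by (intro sum_nonneg) (auto simp: prob_vec_def)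
  moreover have "(\<Sum>j<K. p j * a j) \<le> (\<Sum>j<K. p j)"
    using assms by (intro sum_mono) (auto simp: prob_vec_def intro: mult_left_le)
  ultimately show ?thesis using assms by (simp add: prob_vec_def)
qed

lemma trivial_regret:
  fixes T :: nat
  assumes lip: "L-lipschitz_on {-1..1} f"
    and P: "\<And>r. r < T \<Longrightarrow> prob_vec K (P r)" and q: "prob_vec K q"
    and a01: "\<And>r j. r < T \<Longrightarrow> j < K \<Longrightarrow> 0 \<le> a r j \<and> a r j \<le> 1"
    and b01: "\<And>r. r < T \<Longrightarrow> 0 \<le> bb r \<and> bb r \<le> 1"
  shows "(\<Sum>r<T. f ((\<Sum>j<K. P r j * a r j) - bb r)) - (\<Sum>r<T. f ((\<Sum>j<K. q j * a r j) - bb r))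
          \<le> L * T"
proof -
  have "(\<Sum>r<T. f ((\<Sum>j<K. P r j * a r j) - bb r)) - (\<Sum>r<T. f ((\<Sum>j<K. q j * a r j) - bb r))
      = (\<Sum>r<T. f ((\<Sum>j<K. P r j * a r j) - bb r) - f ((\<Sum>j<K. q j * a r j) - bb r))"
    by (simp add: sum_subtractf)
  also have "\<dots> \<le> (\<Sum>r<T. L)"
  proof (rule sum_mono)
    fix r assume "r \<in> {..<T}"
    then have r: "r < T" by simp
    define u where "u = (\<Sum>j<K. P r j * a r j)"
    define v where "v = (\<Sum>j<K. q j * a r j)"
    have u: "0 \<le> u \<and> u \<le> 1" unfolding u_def using prob_avg01[OF P[OF r], of "a r"] a01 r by auto
    have v: "0 \<le> v \<and> v \<le> 1" unfolding v_def using prob_avg01[OF q, of "a r"] a01 r by auto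
    have "dist (f (u - bb r)) (f (v - bb r)) \<le> L * dist (u - bb r) (v - bb r)"
      using lip u v b01[OF r] by (simp add: lipschitz_on_def)
    moreover have "dist (u - bb r) (v - bb r) \<le> 1" using u v by (auto simp: dist_real_def abs_if)
    moreover have "0 \<le> L" using lip by (simp add: lipschitz_on_def)
    ultimately have "dist (f (u - bb r)) (f (v - bb r)) \<le> L"
      by (meson mult_left_le order_trans)
    then show "f ((\<Sum>j<K. P r j * a r j) - bb r) - f ((\<Sum>j<K. q j * a r j) - bb r) \<le> L"
      unfolding u_def v_def by (simp add: dist_real_def)
  qed
  finally show ?thesis by (simp add: mult.commute)
qed

lemma hedge_regret:
  fixes A :: "'e \<Rightarrow> nat \<Rightarrow> real"
  assumes K: "0 < K" and cvx: "convex_on {-1..1} f" and lip: "L-lipschitz_on {-1..1} f"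
    and a01: "\<And>r j. r < T \<Longrightarrow> j < K \<Longrightarrow> 0 \<le> A (e r) j \<and> A (e r) j \<le> 1"
    and b01: "\<And>r. r < T \<Longrightarrow> 0 \<le> bb r \<and> bb r \<le> 1"
    and q: "prob_vec K q" and eta: "0 < \<eta>" "\<eta> * L \<le> 1"
  shows "(\<Sum>r<T. f ((\<Sum>j<K. hw K \<eta> (hS K \<eta> f L A (map (\<lambda>s. (e s, bb s)) [0..<r])) j * A (e r) j) - bb r))
       - (\<Sum>r<T. f ((\<Sum>j<K. q j * A (e r) j) - bb r)) \<le> ln K / \<eta> + \<eta> * T * L\<^sup>2"
proof -
  define S where "S r = hS K \<eta> f L A (map (\<lambda>s. (e s, bb s)) [0..<r])" for r
  define p where "p r = hw K \<eta> (S r)" for r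
  define a where "a r = A (e r)" for r
  define x where "x r = (\<Sum>j<K. p r j * a r j) - bb r" for r
  define y where "y r = (\<Sum>j<K. q j * a r j) - bb r" for r
  define g where "g r = subg f L (x r)" for r
  define c where "c r j = g r * a r j" for r j
  have L0: "0 \<le> L" using lip by (simp add: lipschitz_on_def)
  have S0: "S 0 j = 0" for j by (simp add: S_def hS_def)
  have Ssuc: "S (Suc r) j = S r j + c r j" for r j
    by (simp add: S_def hS_def hupd_def c_def g_def x_def p_def a_def)
  have Ssum: "S R j = (\<Sum>r<R. c r j)" for R j
    by (induction R) (simp_all add: S0 Ssuc)
  have pprob: "prob_vec K (p r)" for r unfolding p_def by (rule hw_prob[OF K])
  have xin: "x r \<in> {-1..1}" if "r < T" for r
    using prob_avg01[OF pprob, of "a r" r] a01[OF that] b01[OF that] by (auto simp: x_def a_def)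
  have yin: "y r \<in> {-1..1}" if "r < T" for r
    using prob_avg01[OF q, of "a r"] a01[OF that] b01[OF that] by (auto simp: y_def a_def)
  have gb: "\<bar>g r\<bar> \<le> L" if "r < T" for r
    unfolding g_def using subg(2)[OF cvx lip xin[OF that] xin[OF that]] .
  have cb: "\<bar>c r j\<bar> \<le> L" if "r < T" "j < K" for r j
  proof -
    have "\<bar>c r j\<bar> = \<bar>g r\<bar> * \<bar>a r j\<bar>" by (simp add: c_def abs_mult)
    also have "\<dots> \<le> L * 1"
      using gb[OF that(1)] a01[OF that] by (intro mult_mono) (auto simp: a_def)
    finally show ?thesis by simp
  qed
  define W where "W r = (\<Sum>j<K. exp (- \<eta> * S r j))" for r
  have Wpos: "0 < W r" for r unfolding W_def using K by (intro sum_pos) auto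
  have pW: "p r j = exp (- \<eta> * S r j) / W r" for r j by (simp add: p_def hw_def W_def)
  have step: "W (Suc r) \<le> W r * exp (- \<eta> * (\<Sum>j<K. p r j * c r j) + \<eta>\<^sup>2 * L\<^sup>2)" if r: "r < T" for r
  proof -
    have "W (Suc r) = (\<Sum>j<K. W r * (p r j * exp (- \<eta> * c r j)))"
      unfolding W_def[of "Suc r"]
    proof (rule sum.cong[OF refl])
      fix j
      have "exp (- \<eta> * S (Suc r) j) = exp (- \<eta> * S r j) * exp (- \<eta> * c r j)"
        by (simp add: Ssuc distrib_left exp_add[symmetric])
      then show "exp (- \<eta> * S (Suc r) j) = W r * (p r j * exp (- \<eta> * c r j))"
        using Wpos[of r] by (simp add: pW)
    qed
    also have "\<dots> = W r * (\<Sum>j<K. p r j * exp (- \<eta> * c r j))" by (simp add: sum_distrib_left)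
    also have "\<dots> \<le> W r * (\<Sum>j<K. p r j * (1 - \<eta> * c r j + \<eta>\<^sup>2 * L\<^sup>2))"
    proof (rule mult_left_mono[OF sum_mono])
      fix j assume "j \<in> {..<K}"
      then have j: "j < K" by simp
      have cj: "\<bar>c r j\<bar> \<le> L" using cb[OF r j] .
      have "\<bar>- \<eta> * c r j\<bar> \<le> \<eta> * L" using cj eta by (simp add: abs_mult mult_left_mono)
      then have e1: "\<bar>- \<eta> * c r j\<bar> \<le> 1" using eta by linarith
      have "(- \<eta> * c r j)\<^sup>2 = \<eta>\<^sup>2 * (c r j)\<^sup>2" by (simp add: power_mult_distrib)
      also have "\<dots> \<le> \<eta>\<^sup>2 * L\<^sup>2"
        using cj by (intro mult_left_mono) (auto simp: abs_le_square_iff[symmetric] L0)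
      finally have "exp (- \<eta> * c r j) \<le> 1 - \<eta> * c r j + \<eta>\<^sup>2 * L\<^sup>2"
        using exp_bound2[OF e1] by simp
      then show "p r j * exp (- \<eta> * c r j) \<le> p r j * (1 - \<eta> * c r j + \<eta>\<^sup>2 * L\<^sup>2)"
        using pprob[of r] j by (intro mult_left_mono) (auto simp: prob_vec_def)
    qed (use Wpos[of r] in auto)
    also have "(\<Sum>j<K. p r j * (1 - \<eta> * c r j + \<eta>\<^sup>2 * L\<^sup>2))
        = (\<Sum>j<K. p r j) * (1 + \<eta>\<^sup>2 * L\<^sup>2) - \<eta> * (\<Sum>j<K. p r j * c r j)"
    proof -
      have "(\<Sum>j<K. p r j * (1 - \<eta> * c r j + \<eta>\<^sup>2 * L\<^sup>2))
          = (\<Sum>j<K. p r j * (1 + \<eta>\<^sup>2 * L\<^sup>2) - \<eta> * (p r j * c r j))"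
        by (rule sum.cong[OF refl]) (simp add: algebra_simps)
      also have "\<dots> = (\<Sum>j<K. p r j) * (1 + \<eta>\<^sup>2 * L\<^sup>2) - \<eta> * (\<Sum>j<K. p r j * c r j)"
        by (simp add: sum_subtractf sum_distrib_left sum_distrib_right)
      finally show ?thesis .
    qed
    also have "\<dots> = 1 + (- \<eta> * (\<Sum>j<K. p r j * c r j) + \<eta>\<^sup>2 * L\<^sup>2)"
      using pprob[of r] by (simp add: prob_vec_def)
    also have "\<dots> \<le> exp (- \<eta> * (\<Sum>j<K. p r j * c r j) + \<eta>\<^sup>2 * L\<^sup>2)"
      by (rule exp_ge_add_one_self)
    finally show ?thesis using Wpos[of r] by (simp add: mult_left_mono)
  qed
  have W0: "W 0 = K" by (simp add: W_def S0)
  have Wb: "R \<le> T \<Longrightarrow> W R \<le> K * exp (\<Sum>r<R. - \<eta> * (\<Sum>j<K. p r j * c r j) + \<eta>\<^sup>2 * L\<^sup>2)" for R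
  proof (induction R)
    case 0 then show ?case by (simp add: W0)
  next
    case (Suc R)
    then have "W (Suc R) \<le> W R * exp (- \<eta> * (\<Sum>j<K. p R j * c R j) + \<eta>\<^sup>2 * L\<^sup>2)" by (intro step) auto
    also have "\<dots> \<le> K * exp (\<Sum>r<R. - \<eta> * (\<Sum>j<K. p r j * c r j) + \<eta>\<^sup>2 * L\<^sup>2)
                    * exp (- \<eta> * (\<Sum>j<K. p R j * c R j) + \<eta>\<^sup>2 * L\<^sup>2)"
      using Suc by (intro mult_right_mono) auto
    finally show ?case by (simp add: exp_add)
  qed
  define B where "B = ln K / \<eta> + \<eta> * T * L\<^sup>2"
  define P where "P = (\<Sum>r<T. \<Sum>i<K. p r i * c r i)"
  have perj: "P - (\<Sum>r<T. c r j) \<le> B" if j: "j < K" for j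
  proof -
    have "exp (- \<eta> * S T j) \<le> W T" unfolding W_def
      using j by (intro member_le_sum) auto
    also have "\<dots> \<le> K * exp (- \<eta> * P + T * (\<eta>\<^sup>2 * L\<^sup>2))"
      using Wb[of T] by (simp add: P_def sum.distrib sum_distrib_left)
    finally have "ln (exp (- \<eta> * S T j)) \<le> ln (K * exp (- \<eta> * P + T * (\<eta>\<^sup>2 * L\<^sup>2)))"
      using K by (subst ln_le_cancel_iff) auto
    then have "- \<eta> * S T j \<le> ln K + (- \<eta> * P + T * (\<eta>\<^sup>2 * L\<^sup>2))"
      using K by (simp add: ln_mult)
    then have "\<eta> * (P - S T j) \<le> \<eta> * B" using eta
      by (simp add: B_def algebra_simps power2_eq_square)
    then show ?thesis using eta by (simp add: Ssum)
  qed
  have lin: "f (x r) - f (y r) \<le> (\<Sum>i<K. p r i * c r i) - (\<Sum>j<K. q j * c r j)" if r: "r < T" for r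
  proof -
    have "f (x r) + g r * (y r - x r) \<le> f (y r)"
      unfolding g_def by (rule subg(1)[OF cvx lip xin[OF r] yin[OF r]])
    moreover have "g r * (x r - y r) = (\<Sum>i<K. p r i * c r i) - (\<Sum>j<K. q j * c r j)"
      by (simp add: x_def y_def c_def sum_distrib_left algebra_simps)
    ultimately show ?thesis by (simp add: algebra_simps)
  qed
  have "(\<Sum>r<T. f (x r)) - (\<Sum>r<T. f (y r)) = (\<Sum>r<T. f (x r) - f (y r))" by (simp add: sum_subtractf)
  also have "\<dots> \<le> (\<Sum>r<T. (\<Sum>i<K. p r i * c r i) - (\<Sum>j<K. q j * c r j))"
    using lin by (intro sum_mono) auto
  also have "\<dots> = (\<Sum>j<K. q j * (P - (\<Sum>r<T. c r j)))"
  proof -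
    have "(\<Sum>r<T. (\<Sum>i<K. p r i * c r i) - (\<Sum>j<K. q j * c r j)) = P - (\<Sum>j<K. q j * (\<Sum>r<T. c r j))"
    proof -
      have "(\<Sum>r<T. (\<Sum>i<K. p r i * c r i) - (\<Sum>j<K. q j * c r j))
          = P - (\<Sum>r<T. \<Sum>j<K. q j * c r j)" by (simp add: P_def sum_subtractf)
      also have "(\<Sum>r<T. \<Sum>j<K. q j * c r j) = (\<Sum>j<K. \<Sum>r<T. q j * c r j)" by (rule sum.swap)
      also have "\<dots> = (\<Sum>j<K. q j * (\<Sum>r<T. c r j))" by (simp add: sum_distrib_left)
      finally show ?thesis .
    qed
    also have "\<dots> = (\<Sum>j<K. q j) * P - (\<Sum>j<K. q j * (\<Sum>r<T. c r j))" using q by (simp add: prob_vec_def)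
    finally show ?thesis by (simp add: sum_distrib_right right_diff_distrib sum_subtractf)
  qed
  also have "\<dots> \<le> (\<Sum>j<K. q j * B)"
    using perj q by (intro sum_mono mult_left_mono) (auto simp: prob_vec_def)
  also have "\<dots> = B" using q by (simp add: prob_vec_def sum_distrib_right[symmetric])
  finally show ?thesis by (simp add: B_def x_def y_def p_def S_def a_def)
qed


lemma msum_props:
  assumes "\<forall>x\<in>set xs. f x \<in> carrier_mat m m"
  shows "msum m f xs \<in> carrier_mat m m \<and>
    (\<forall>i j. i < m \<longrightarrow> j < m \<longrightarrow> msum m f xs $$ (i, j) = (\<Sum>x\<leftarrow>xs. f x $$ (i, j)))"
  using assms
proof (induction xs)
  case Nil then show ?case by (simp add: msum_def)
next
  case (Cons a xs)
  have eq: "msum m f (a # xs) = f a + msum m f xs" by (simp add: msum_def)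
  from Cons show ?case unfolding eq by auto
qed

lemma msum_carrier: "\<forall>x\<in>set xs. f x \<in> carrier_mat m m \<Longrightarrow> msum m f xs \<in> carrier_mat m m"
  using msum_props by blast

lemma msum_index: "\<forall>x\<in>set xs. f x \<in> carrier_mat m m \<Longrightarrow> i < m \<Longrightarrow> j < m \<Longrightarrow>
   msum m f xs $$ (i, j) = (\<Sum>x\<leftarrow>xs. f x $$ (i, j))"
  using msum_props by blast

lemma sum_list_upt_sum: "(\<Sum>x\<leftarrow>[0..<K]. g x) = (\<Sum>x<K. g x)"
  by (simp add: sum_set_upt_conv_sum_list_nat[symmetric] atLeast0LessThan)

lemma kron_carrier: "kron A B \<in> carrier_mat (dim_row A * dim_row B) (dim_col A * dim_col B)"
  by (simp add: kron_def)

lemma kron_index: "i < dim_row A * dim_row B \<Longrightarrow> j < dim_col A * dim_col B \<Longrightarrow>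
  kron A B $$ (i, j) = A $$ (i div dim_row B, j div dim_col B) * B $$ (i mod dim_row B, j mod dim_col B)"
  by (simp add: kron_def)

lemma ketbra_carrier: "ketbra d i j \<in> carrier_mat d d" by (simp add: ketbra_def)

lemma ketbra_index: "a < d \<Longrightarrow> b < d \<Longrightarrow> ketbra d i j $$ (a, b) = (if a = i \<and> b = j then 1 else 0)"
  by (simp add: ketbra_def)

lemma div_lt_sq: "p < d * d \<Longrightarrow> p div d < (d::nat)"
  by (simp add: less_mult_imp_div_less)

lemma mod_lt_sq: "p < d * d \<Longrightarrow> p mod d < (d::nat)"
  by (cases "d = 0") auto

lemma choi_props:
  assumes Phi: "\<And>i j. i < d \<Longrightarrow> j < d \<Longrightarrow> \<Phi> (ketbra d i j) \<in> carrier_mat d d"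
  shows "choi d \<Phi> \<in> carrier_mat (d * d) (d * d)"
    and "p < d * d \<Longrightarrow> q < d * d \<Longrightarrow>
         choi d \<Phi> $$ (p, q) = \<Phi> (ketbra d (p div d) (q div d)) $$ (p mod d, q mod d)"
proof -
  let ?f = "\<lambda>(i, j). kron (ketbra d i j) (\<Phi> (ketbra d i j))"
  have car: "\<forall>x\<in>set (List.product [0..<d] [0..<d]). ?f x \<in> carrier_mat (d * d) (d * d)"
  proof
    fix x assume "x \<in> set (List.product [0..<d] [0..<d])"
    then obtain i j where x: "x = (i, j)" "i < d" "j < d" by auto
    show "?f x \<in> carrier_mat (d * d) (d * d)"
      using kron_carrier[of "ketbra d i j" "\<Phi> (ketbra d i j)"] Phi[OF x(2,3)] x(1)
      by (auto simp: ketbra_def)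
  qed
  show "choi d \<Phi> \<in> carrier_mat (d * d) (d * d)"
    unfolding choi_def by (rule msum_carrier[OF car])
  assume pq: "p < d * d" "q < d * d"
  have pd: "p div d < d" "p mod d < d" "q div d < d" "q mod d < d"
    using pq div_lt_sq mod_lt_sq by auto
  have "choi d \<Phi> $$ (p, q) = (\<Sum>x\<leftarrow>List.product [0..<d] [0..<d]. ?f x $$ (p, q))"
    unfolding choi_def by (rule msum_index[OF car pq])
  also have "\<dots> = (\<Sum>x\<in>{0..<d} \<times> {0..<d}. ?f x $$ (p, q))"
    by (subst sum_list_distinct_conv_sum_set) (auto simp: distinct_product)
  also have "\<dots> = (\<Sum>x\<in>{0..<d} \<times> {0..<d}. if (p div d, q div d) = x then
                     \<Phi> (ketbra d (p div d) (q div d)) $$ (p mod d, q mod d) else 0)"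
  proof (rule sum.cong[OF refl])
    fix x assume "x \<in> {0..<d} \<times> {0..<d}"
    then obtain i j where x: "x = (i, j)" "i < d" "j < d" by auto
    have ci: "\<Phi> (ketbra d i j) \<in> carrier_mat d d" using Phi x by auto
    have "?f x $$ (p, q) = ketbra d i j $$ (p div d, q div d) * \<Phi> (ketbra d i j) $$ (p mod d, q mod d)"
      using kron_index[of p "ketbra d i j" "\<Phi> (ketbra d i j)" q] ci pq x(1) by (simp add: ketbra_def)
    then show "?f x $$ (p, q) = (if (p div d, q div d) = x then
                     \<Phi> (ketbra d (p div d) (q div d)) $$ (p mod d, q mod d) else 0)"
      using x pd by (auto simp: ketbra_index)
  qed
  also have "\<dots> = \<Phi> (ketbra d (p div d) (q div d)) $$ (p mod d, q mod d)"
    using pd by (simp add: sum.delta')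
  finally show "choi d \<Phi> $$ (p, q) = \<Phi> (ketbra d (p div d) (q div d)) $$ (p mod d, q mod d)" .
qed

lemma mtrace_mult:
  assumes "A \<in> carrier_mat m m" "B \<in> carrier_mat m m"
  shows "mtrace (A * B) = (\<Sum>x<m. \<Sum>y<m. A $$ (x, y) * B $$ (y, x))"
  using assms by (simp add: mtrace_def scalar_prod_def atLeast0LessThan)

lemma sum_split_nat: "(\<Sum>x<m * n. f x) = (\<Sum>i<m. \<Sum>a<n. f (i * n + a))" for f :: "nat \<Rightarrow> 'a::comm_monoid_add"
proof (induction m)
  case 0 then show ?case by simp
next
  case (Suc m)
  have "{..<Suc m * n} = {..<m * n} \<union> {m * n..<m * n + n}" by auto
  then have "(\<Sum>x<Suc m * n. f x) = (\<Sum>x<m * n. f x) + (\<Sum>x\<in>{m * n..<m * n + n}. f x)"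
    by (simp add: sum.union_disjoint ivl_disj_int)
  also have "(\<Sum>x\<in>{m * n..<m * n + n}. f x) = (\<Sum>a<n. f (m * n + a))"
    using sum.shift_bounds_nat_ivl[of f 0 "m * n" n] by (simp add: atLeast0LessThan add.commute)
  finally show ?case using Suc by simp
qed


lemma dm_div: "r < n \<Longrightarrow> (x * n + r) div n = (x::nat)"
  by simp
lemma dm_mod: "r < n \<Longrightarrow> (x * n + r) mod n = (r::nat)"
  by simp

lemma quad_expand:
  fixes h :: "nat \<Rightarrow> nat \<Rightarrow> complex"
  shows "(\<Sum>I<D * D. \<Sum>J<D * D. h I J) = (\<Sum>x<D. \<Sum>r<D. \<Sum>y<D. \<Sum>s<D. h (x * D + r) (y * D + s))"
  by (simp add: sum_split_nat)

lemma psd_X: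
  assumes E: "psd (D) E" and Dd: "D = d * d" and N: "N = D * D"
  defines "X \<equiv> mat N N (\<lambda>(I, J). E $$ (J div D, I div D) *
            (if I div d mod d = I mod d \<and> J div d mod d = J mod d then 1 else 0))"
  shows "psd N X"
proof -
  have Ec: "E \<in> carrier_mat D D" using E by (simp add: psd_def)
  define \<delta> :: "nat \<Rightarrow> complex" where "\<delta> I = (if I div d mod d = I mod d then 1 else 0)" for I
  have Xe: "X $$ (I, J) = \<delta> I * E $$ (J div D, I div D) * \<delta> J" if "I < N" "J < N" for I J
    using that by (simp add: X_def \<delta>_def)
  have cd: "cnj (\<delta> I) = \<delta> I" for I by (simp add: \<delta>_def)
  show ?thesis unfolding psd_def
  proof (intro conjI ballI)
    show "X \<in> carrier_mat N N" by (simp add: X_def)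
    fix w :: "complex vec" assume w: "w \<in> carrier_vec N"
    define Z where "Z x = (\<Sum>s<D. \<delta> (x * D + s) * w $ (x * D + s))" for x
    define z where "z = vec D (\<lambda>y. cnj (Z y))"
    have "conjugate w \<bullet> (X *\<^sub>v w) = (\<Sum>I<N. cnj (w $ I) * (\<Sum>J<N. X $$ (I, J) * w $ J))"
      using w by (simp add: scalar_prod_def X_def atLeast0LessThan)
    also have "\<dots> = (\<Sum>I<N. \<Sum>J<N. cnj (w $ I) * \<delta> I * E $$ (J div D, I div D) * (\<delta> J * w $ J))"
      by (intro sum.cong refl) (simp add: sum_distrib_left Xe mult.assoc)
    also have "\<dots> = (\<Sum>x<D. \<Sum>r<D. \<Sum>y<D. \<Sum>s<D. cnj (w $ (x * D + r)) * \<delta> (x * D + r) * E $$ (y, x)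
                       * (\<delta> (y * D + s) * w $ (y * D + s)))"
    proof -
      have "D = 0 \<or> 0 < D" by auto
      then show ?thesis
      proof
        assume "D = 0" then show ?thesis using N by simp
      next
        assume D0: "0 < D"
        show ?thesis unfolding N quad_expand using D0 by simp
      qed
    qed
    also have "\<dots> = (\<Sum>x<D. \<Sum>y<D. cnj (Z x) * E $$ (y, x) * Z y)"
    proof (rule sum.cong[OF refl])
      fix x assume "x \<in> {..<D}"
      have "(\<Sum>r<D. \<Sum>y<D. \<Sum>s<D. cnj (w $ (x * D + r)) * \<delta> (x * D + r) * E $$ (y, x)
                       * (\<delta> (y * D + s) * w $ (y * D + s)))
          = (\<Sum>y<D. \<Sum>r<D. \<Sum>s<D. cnj (w $ (x * D + r)) * \<delta> (x * D + r) * E $$ (y, x)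
                       * (\<delta> (y * D + s) * w $ (y * D + s)))"
        by (rule sum.swap)
      also have "\<dots> = (\<Sum>y<D. cnj (Z x) * E $$ (y, x) * Z y)"
      proof (rule sum.cong[OF refl])
        fix y assume "y \<in> {..<D}"
        have "cnj (Z x) * E $$ (y, x) * Z y
            = (\<Sum>r<D. cnj (w $ (x * D + r)) * \<delta> (x * D + r)) * E $$ (y, x) * Z y"
          by (simp add: Z_def cd mult.commute)
        also have "\<dots> = (\<Sum>r<D. \<Sum>s<D. cnj (w $ (x * D + r)) * \<delta> (x * D + r) * E $$ (y, x)
                       * (\<delta> (y * D + s) * w $ (y * D + s)))"
          by (simp add: Z_def sum_distrib_left sum_distrib_right) (rule sum.swap)
        finally show "(\<Sum>r<D. \<Sum>s<D. cnj (w $ (x * D + r)) * \<delta> (x * D + r) * E $$ (y, x)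
                       * (\<delta> (y * D + s) * w $ (y * D + s))) = cnj (Z x) * E $$ (y, x) * Z y" by simp
      qed
      finally show "(\<Sum>r<D. \<Sum>y<D. \<Sum>s<D. cnj (w $ (x * D + r)) * \<delta> (x * D + r) * E $$ (y, x)
                       * (\<delta> (y * D + s) * w $ (y * D + s))) = (\<Sum>y<D. cnj (Z x) * E $$ (y, x) * Z y)" .
    qed
    also have "\<dots> = conjugate z \<bullet> (E *\<^sub>v z)"
    proof -
      have "conjugate z \<bullet> (E *\<^sub>v z) = (\<Sum>y<D. Z y * (\<Sum>x<D. E $$ (y, x) * cnj (Z x)))"
        using Ec by (simp add: scalar_prod_def z_def atLeast0LessThan)
      also have "\<dots> = (\<Sum>y<D. \<Sum>x<D. cnj (Z x) * E $$ (y, x) * Z y)"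
        by (simp add: sum_distrib_left mult.commute mult.left_commute)
      also have "\<dots> = (\<Sum>x<D. \<Sum>y<D. cnj (Z x) * E $$ (y, x) * Z y)"
        by (rule sum.swap)
      finally show ?thesis by simp
    qed
    finally have eq: "conjugate w \<bullet> (X *\<^sub>v w) = conjugate z \<bullet> (E *\<^sub>v z)" .
    have "z \<in> carrier_vec D" by (simp add: z_def)
    then show "Im (conjugate w \<bullet> (X *\<^sub>v w)) = 0" and "0 \<le> Re (conjugate w \<bullet> (X *\<^sub>v w))"
      using E eq by (simp_all add: psd_def)
  qed
qed


lemma lin_ketbra: "linear_map_on d \<Phi> \<Longrightarrow> i < d \<Longrightarrow> j < d \<Longrightarrow> \<Phi> (ketbra d i j) \<in> carrier_mat d d"
  by (simp add: linear_map_on_def ketbra_carrier)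

lemma idx_arith:
  fixes d x a :: nat
  assumes d: "0 < d" and x: "x < d * d" and a: "a < d"
  defines "I' \<equiv> ((x * (d * d) + x) div d) * d + a"
  shows "I' div (d * d) = x" "I' div d mod d = x div d" "I' mod d = a" "I' < (d * d) * (d * d)"
    "(x * (d * d) + x) mod d = x mod d"
proof -
  have k: "x div d < d" using x by (simp add: less_mult_imp_div_less)
  have "x * (d * d) + x = (x * d + x div d) * d + x mod d"
    by (simp add: algebra_simps)
  then have q: "(x * (d * d) + x) div d = x * d + x div d" using d by simp
  have I: "I' = (x * d + x div d) * d + a" unfolding I'_def q ..
  have r: "x div d * d + a < d * d"
  proof -
    have "x div d * d + a < x div d * d + d" using a by simp
    also have "\<dots> = (x div d + 1) * d" by simp
    also have "\<dots> \<le> d * d" using k by (intro mult_right_mono) auto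
    finally show ?thesis .
  qed
  have I2: "I' = x * (d * d) + (x div d * d + a)" unfolding I by (simp add: algebra_simps)
  show "I' div (d * d) = x" unfolding I2 by (rule dm_div[OF r])
  show "I' div d mod d = x div d" unfolding I using a k by simp
  show "I' mod d = a" unfolding I using a by simp
  have "I' < x * (d * d) + d * d" unfolding I2 using r by simp
  also have "\<dots> = (x + 1) * (d * d)" by simp
  also have "\<dots> \<le> (d * d) * (d * d)" using x by (intro mult_right_mono) auto
  finally show "I' < (d * d) * (d * d)" .
  show "(x * (d * d) + x) mod d = x mod d" by (simp add: mod_mult_self4 mult.assoc[symmetric])
qed

lemma choi_trace_nonneg:
  assumes E: "psd (d * d) E" and lin: "linear_map_on d \<Phi>" and cp: "completely_positive d \<Phi>"
  shows "0 \<le> Re (mtrace (E * choi d \<Phi>))"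
proof (cases "d = 0")
  case True
  have "E \<in> carrier_mat 0 0" using E True by (simp add: psd_def)
  then show ?thesis by (simp add: mtrace_def)
next
  case False
  then have d: "0 < d" by simp
  define D where "D = d * d"
  define M where "M = d * d * d"
  have MD: "M * d = D * D" by (simp add: M_def D_def mult.assoc mult.left_commute)
  have Ec: "E \<in> carrier_mat D D" using E by (simp add: psd_def D_def)
  have ck: "\<And>i j. i < d \<Longrightarrow> j < d \<Longrightarrow> \<Phi> (ketbra d i j) \<in> carrier_mat d d"
    using lin_ketbra[OF lin] by auto
  have Cc: "choi d \<Phi> \<in> carrier_mat D D" unfolding D_def by (rule choi_props(1)[of d \<Phi>, OF ck])
  define X where "X \<equiv> mat (M * d) (M * d) (\<lambda>(I, J). E $$ (J div D, I div D) *
            (if I div d mod d = I mod d \<and> J div d mod d = J mod d then 1 else 0))"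
  have psdX: "psd (M * d) X" unfolding X_def
    by (rule psd_X[OF _ D_def MD]) (use E D_def in simp)
  define Y where "Y = id_tensor M d \<Phi> X"
  have psdY: "psd (M * d) Y" using cp psdX by (simp add: completely_positive_def Y_def)
  have Yc: "Y \<in> carrier_mat (D * D) (D * D)" using psdY MD by (simp add: psd_def)
  have lt: "z * D + r < M * d" if "z < D" "r < D" for z r
  proof -
    have "z * D + r < z * D + D" using that by simp
    also have "\<dots> = (z + 1) * D" by simp
    also have "\<dots> \<le> D * D" using that by (intro mult_right_mono) auto
    finally show ?thesis using MD by simp
  qed
  have Yent: "Y $$ (x * D + x, y * D + y) = E $$ (y, x) * choi d \<Phi> $$ (x, y)"
    if x: "x < D" and y: "y < D" for x y
  proof -
    have xd: "x < d * d" "y < d * d" using x y by (auto simp: D_def)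
    define B where "B = mat d d (\<lambda>(a, b). X $$ (((x * D + x) div d) * d + a, ((y * D + y) div d) * d + b))"
    have Y1: "Y $$ (x * D + x, y * D + y) = \<Phi> B $$ ((x * D + x) mod d, (y * D + y) mod d)"
      using lt[OF x x] lt[OF y y] by (simp add: Y_def id_tensor_def B_def)
    have KB: "B = E $$ (y, x) \<cdot>\<^sub>m ketbra d (x div d) (y div d)"
    proof (rule eq_matI)
      show "dim_row B = dim_row (E $$ (y, x) \<cdot>\<^sub>m ketbra d (x div d) (y div d))"
        "dim_col B = dim_col (E $$ (y, x) \<cdot>\<^sub>m ketbra d (x div d) (y div d))"
        by (simp_all add: B_def ketbra_def)
      fix a b assume ab: "a < dim_row (E $$ (y, x) \<cdot>\<^sub>m ketbra d (x div d) (y div d))"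
        "b < dim_col (E $$ (y, x) \<cdot>\<^sub>m ketbra d (x div d) (y div d))"
      then have a: "a < d" and b: "b < d" by (simp_all add: ketbra_def)
      note ia = idx_arith[OF d xd(1) a] and ib = idx_arith[OF d xd(2) b]
      have "B $$ (a, b) = X $$ (((x * D + x) div d) * d + a, ((y * D + y) div d) * d + b)"
        using a b by (simp add: B_def)
      also have "\<dots> = E $$ (y, x) * (if x div d = a \<and> y div d = b then 1 else 0)"
      proof -
        define Ia where "Ia = ((x * D + x) div d) * d + a"
        define Jb where "Jb = ((y * D + y) div d) * d + b"
        have Ib: "Ia < M * d" "Jb < M * d" 
        proof -
          have MD': "M * d = d * d * (d * d)" by (simp add: M_def mult_ac)
          show "Ia < M * d" "Jb < M * d" unfolding Ia_def Jb_def D_def MD' using ia(4) ib(4) by simp_all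
        qed
        have "X $$ (Ia, Jb) = E $$ (Jb div D, Ia div D) *
            (if Ia div d mod d = Ia mod d \<and> Jb div d mod d = Jb mod d then 1 else 0)"
          using Ib by (simp add: X_def)
        also have "\<dots> = E $$ (y, x) * (if x div d = a \<and> y div d = b then 1 else 0)"
          using ia ib by (simp add: Ia_def Jb_def D_def)
        finally show ?thesis by (simp add: Ia_def Jb_def)
      qed
      also have "\<dots> = (E $$ (y, x) \<cdot>\<^sub>m ketbra d (x div d) (y div d)) $$ (a, b)"
        using a b by (auto simp: ketbra_def)
      finally show "B $$ (a, b) = (E $$ (y, x) \<cdot>\<^sub>m ketbra d (x div d) (y div d)) $$ (a, b)" .
    qed
    have kc: "ketbra d (x div d) (y div d) \<in> carrier_mat d d" by (rule ketbra_carrier)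
    have PB: "\<Phi> B = E $$ (y, x) \<cdot>\<^sub>m \<Phi> (ketbra d (x div d) (y div d))"
      unfolding KB using lin kc by (simp add: linear_map_on_def)
    have kdiv: "x div d < d" "y div d < d" using xd by (simp_all add: less_mult_imp_div_less)
    have Pc: "\<Phi> (ketbra d (x div d) (y div d)) \<in> carrier_mat d d"
      by (rule lin_ketbra[OF lin kdiv])
    have mods: "x mod d < d" "y mod d < d" using d by simp_all
    have "Y $$ (x * D + x, y * D + y) = E $$ (y, x) * \<Phi> (ketbra d (x div d) (y div d)) $$ (x mod d, y mod d)"
      unfolding Y1 PB using idx_arith(5)[OF d xd(1) d] idx_arith(5)[OF d xd(2) d] Pc mods
      by (simp add: D_def)
    also have "\<dots> = E $$ (y, x) * choi d \<Phi> $$ (x, y)"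
      using choi_props(2)[of d \<Phi>, OF ck xd] by simp
    finally show ?thesis .
  qed
  define v where "v = vec (M * d) (\<lambda>I. if I div D = I mod D then 1 else (0::complex))"
  have vc: "v \<in> carrier_vec (M * d)" by (simp add: v_def)
  have "conjugate v \<bullet> (Y *\<^sub>v v) = (\<Sum>I<D * D. cnj (v $ I) * (\<Sum>J<D * D. Y $$ (I, J) * v $ J))"
    using Yc MD by (simp add: scalar_prod_def v_def atLeast0LessThan)
  also have "\<dots> = (\<Sum>x<D. \<Sum>y<D. Y $$ (x * D + x, y * D + y))"
  proof -
    have inner: "(\<Sum>J<D * D. Y $$ (I, J) * v $ J) = (\<Sum>y<D. Y $$ (I, y * D + y))" for I
    proof -
      have "(\<Sum>J<D * D. Y $$ (I, J) * v $ J) = (\<Sum>y<D. \<Sum>s<D. Y $$ (I, y * D + s) * v $ (y * D + s))"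
        by (rule sum_split_nat)
      also have "\<dots> = (\<Sum>y<D. \<Sum>s<D. if y = s then Y $$ (I, y * D + s) else 0)"
      proof (rule sum.cong[OF refl], rule sum.cong[OF refl])
        fix y s assume "y \<in> {..<D}" "s \<in> {..<D}"
        then have "y * D + s < M * d"
          using lt by simp
        then show "Y $$ (I, y * D + s) * v $ (y * D + s) = (if y = s then Y $$ (I, y * D + s) else 0)"
          using \<open>s \<in> {..<D}\<close> by (simp add: v_def)
      qed
      also have "\<dots> = (\<Sum>y<D. Y $$ (I, y * D + y))"
        by (simp add: sum.delta)
      finally show ?thesis .
    qed
    have "(\<Sum>I<D * D. cnj (v $ I) * (\<Sum>J<D * D. Y $$ (I, J) * v $ J))
        = (\<Sum>x<D. \<Sum>r<D. cnj (v $ (x * D + r)) * (\<Sum>y<D. Y $$ (x * D + r, y * D + y)))"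
      unfolding inner by (rule sum_split_nat)
    also have "\<dots> = (\<Sum>x<D. \<Sum>r<D. if x = r then (\<Sum>y<D. Y $$ (x * D + r, y * D + y)) else 0)"
    proof (rule sum.cong[OF refl], rule sum.cong[OF refl])
      fix x r assume "x \<in> {..<D}" "r \<in> {..<D}"
      then have "x * D + r < M * d"
        using lt by simp
      then show "cnj (v $ (x * D + r)) * (\<Sum>y<D. Y $$ (x * D + r, y * D + y))
          = (if x = r then (\<Sum>y<D. Y $$ (x * D + r, y * D + y)) else 0)"
        using \<open>r \<in> {..<D}\<close> by (simp add: v_def)
    qed
    also have "\<dots> = (\<Sum>x<D. \<Sum>y<D. Y $$ (x * D + x, y * D + y))"
      by (simp add: sum.delta)
    finally show ?thesis .
  qed
  also have "\<dots> = (\<Sum>x<D. \<Sum>y<D. E $$ (y, x) * choi d \<Phi> $$ (x, y))"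
    by (intro sum.cong refl Yent) auto
  also have "\<dots> = mtrace (E * choi d \<Phi>)"
    unfolding mtrace_mult[OF Ec Cc] by (rule sum.swap)
  finally have "conjugate v \<bullet> (Y *\<^sub>v v) = mtrace (E * choi d \<Phi>)" .
  moreover have "0 \<le> Re (conjugate v \<bullet> (Y *\<^sub>v v))" using psdY vc unfolding psd_def by blast
  ultimately show ?thesis by simp
qed


lemma lt_sq: "i < d \<Longrightarrow> a < d \<Longrightarrow> i * d + a < d * (d::nat)"
proof -
  assume "i < d" "a < d"
  then have "i * d + a < i * d + d" by simp
  also have "\<dots> = (i + 1) * d" by simp
  also have "\<dots> \<le> d * d" using \<open>i < d\<close> by (intro mult_right_mono) auto
  finally show ?thesis .
qed

lemma trace_kron_choi:
  assumes sc: "\<sigma> \<in> carrier_mat d d" and lin: "linear_map_on d \<Phi>" and tp: "trace_preserving d \<Phi>"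
  shows "mtrace (kron \<sigma> (1\<^sub>m d) * choi d \<Phi>) = mtrace \<sigma>"
proof -
  have ck: "\<And>i j. i < d \<Longrightarrow> j < d \<Longrightarrow> \<Phi> (ketbra d i j) \<in> carrier_mat d d"
    using lin_ketbra[OF lin] by auto
  have Cc: "choi d \<Phi> \<in> carrier_mat (d * d) (d * d)" by (rule choi_props(1)[of d \<Phi>, OF ck])
  have Kc: "kron \<sigma> (1\<^sub>m d) \<in> carrier_mat (d * d) (d * d)"
    using kron_carrier[of \<sigma> "1\<^sub>m d"] sc by simp
  have Kent: "kron \<sigma> (1\<^sub>m d) $$ (i * d + a, j * d + b) = \<sigma> $$ (i, j) * (if a = b then 1 else 0)"
    if "i < d" "a < d" "j < d" "b < d" for i a j b
  proof -
    have "i * d + a < d * d" "j * d + b < d * d"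
      using that by (simp_all add: lt_sq)
    then show ?thesis using kron_index[of "i * d + a" \<sigma> "1\<^sub>m d" "j * d + b"] sc that by simp
  qed
  have Cent: "choi d \<Phi> $$ (j * d + b, i * d + a) = \<Phi> (ketbra d j i) $$ (b, a)"
    if "i < d" "a < d" "j < d" "b < d" for i a j b
  proof -
    have "i * d + a < d * d" "j * d + b < d * d"
      using that by (simp_all add: lt_sq)
    then show ?thesis using choi_props(2)[of d \<Phi>, OF ck] that by simp
  qed
  have trk: "mtrace (\<Phi> (ketbra d j i)) = (if i = j then 1 else 0)" if "i < d" "j < d" for i j
  proof -
    have "mtrace (\<Phi> (ketbra d j i)) = mtrace (ketbra d j i)"
      using tp ketbra_carrier by (simp add: trace_preserving_def)
    also have "\<dots> = (\<Sum>a<d. if a = j \<and> a = i then 1 else 0)"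
      by (simp add: mtrace_def ketbra_def)
    also have "\<dots> = (if i = j then 1 else 0)"
      using that by (cases "i = j") (auto simp: sum.delta intro!: sum.neutral)
    finally show ?thesis .
  qed
  have "mtrace (kron \<sigma> (1\<^sub>m d) * choi d \<Phi>)
      = (\<Sum>x<d * d. \<Sum>y<d * d. kron \<sigma> (1\<^sub>m d) $$ (x, y) * choi d \<Phi> $$ (y, x))"
    by (rule mtrace_mult[OF Kc Cc])
  also have "\<dots> = (\<Sum>i<d. \<Sum>a<d. \<Sum>j<d. \<Sum>b<d.
       kron \<sigma> (1\<^sub>m d) $$ (i * d + a, j * d + b) * choi d \<Phi> $$ (j * d + b, i * d + a))"
    by (simp only: sum_split_nat)
  also have "\<dots> = (\<Sum>i<d. \<Sum>a<d. \<Sum>j<d. \<Sum>b<d.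
       if a = b then \<sigma> $$ (i, j) * \<Phi> (ketbra d j i) $$ (b, a) else 0)"
    by (intro sum.cong refl) (simp add: Kent Cent)
  also have "\<dots> = (\<Sum>i<d. \<Sum>a<d. \<Sum>j<d. \<sigma> $$ (i, j) * \<Phi> (ketbra d j i) $$ (a, a))"
    by (simp add: sum.delta)
  also have "\<dots> = (\<Sum>i<d. \<Sum>j<d. \<Sum>a<d. \<sigma> $$ (i, j) * \<Phi> (ketbra d j i) $$ (a, a))"
    by (intro sum.cong refl sum.swap)
  also have "\<dots> = (\<Sum>i<d. \<Sum>j<d. \<sigma> $$ (i, j) * mtrace (\<Phi> (ketbra d j i)))"
  proof (intro sum.cong refl)
    fix i j assume ij: "i \<in> {..<d}" "j \<in> {..<d}"
    have "dim_row (\<Phi> (ketbra d j i)) = d" using ck ij by auto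
    then show "(\<Sum>a<d. \<sigma> $$ (i, j) * \<Phi> (ketbra d j i) $$ (a, a)) = \<sigma> $$ (i, j) * mtrace (\<Phi> (ketbra d j i))"
      by (simp add: mtrace_def sum_distrib_left)
  qed
  also have "\<dots> = (\<Sum>i<d. \<Sum>j<d. if i = j then \<sigma> $$ (i, j) else 0)"
    by (intro sum.cong refl) (simp add: trk)
  also have "\<dots> = mtrace \<sigma>"
    using sc by (simp add: sum.delta mtrace_def)
  finally show ?thesis .
qed

lemma mtrace_minus_mult:
  assumes "A \<in> carrier_mat m m" "B \<in> carrier_mat m m" "C \<in> carrier_mat m m"
  shows "mtrace ((A - B) * C) = mtrace (A * C) - mtrace (B * C)"
proof -
  have "A - B \<in> carrier_mat m m" using assms(2) by (rule minus_carrier_mat)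
  then have "mtrace ((A - B) * C) = (\<Sum>x<m. \<Sum>y<m. (A - B) $$ (x, y) * C $$ (y, x))"
    using mtrace_mult assms by blast
  also have "\<dots> = (\<Sum>x<m. \<Sum>y<m. A $$ (x, y) * C $$ (y, x) - B $$ (x, y) * C $$ (y, x))"
    using assms by (intro sum.cong refl) (simp add: left_diff_distrib)
  also have "\<dots> = mtrace (A * C) - mtrace (B * C)"
    using assms by (simp add: mtrace_mult sum_subtractf)
  finally show ?thesis .
qed

lemma choi_trace_01:
  assumes E: "channel_test_op d E" and ch: "linear_map_on d \<Phi>" "completely_positive d \<Phi>" "trace_preserving d \<Phi>"
  shows "0 \<le> Re (mtrace (E * choi d \<Phi>)) \<and> Re (mtrace (E * choi d \<Phi>)) \<le> 1"
proof -
  have Ep: "psd (d * d) E" using E by (simp add: channel_test_op_def)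
  obtain \<sigma> where s: "density_op d \<sigma>" and le: "loewner_le (d * d) E (kron \<sigma> (1\<^sub>m d))"
    using E by (auto simp: channel_test_op_def)
  have sc: "\<sigma> \<in> carrier_mat d d" and tr: "mtrace \<sigma> = 1" using s by (auto simp: density_op_def psd_def)
  have ck: "\<And>i j. i < d \<Longrightarrow> j < d \<Longrightarrow> \<Phi> (ketbra d i j) \<in> carrier_mat d d"
    using lin_ketbra[OF ch(1)] by auto
  have Cc: "choi d \<Phi> \<in> carrier_mat (d * d) (d * d)" by (rule choi_props(1)[of d \<Phi>, OF ck])
  have Kc: "kron \<sigma> (1\<^sub>m d) \<in> carrier_mat (d * d) (d * d)"
    using kron_carrier[of \<sigma> "1\<^sub>m d"] sc by simp
  have Ec: "E \<in> carrier_mat (d * d) (d * d)" using Ep by (simp add: psd_def)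
  have p2: "psd (d * d) (kron \<sigma> (1\<^sub>m d) - E)" using le by (simp add: loewner_le_def)
  have "0 \<le> Re (mtrace ((kron \<sigma> (1\<^sub>m d) - E) * choi d \<Phi>))"
    by (rule choi_trace_nonneg[OF p2 ch(1,2)])
  also have "mtrace ((kron \<sigma> (1\<^sub>m d) - E) * choi d \<Phi>) = 1 - mtrace (E * choi d \<Phi>)"
    using mtrace_minus_mult[OF Kc Ec Cc] trace_kron_choi[OF sc ch(1,3)] tr by simp
  finally have "Re (mtrace (E * choi d \<Phi>)) \<le> 1" by simp
  moreover have "0 \<le> Re (mtrace (E * choi d \<Phi>))" by (rule choi_trace_nonneg[OF Ep ch(1,2)])
  ultimately show ?thesis by simp
qed

lemma trace_lincomb:
  assumes Ec: "E \<in> carrier_mat m m" and Mc: "M \<in> carrier_mat m m"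
    and Fc: "\<And>j. j < K \<Longrightarrow> F j \<in> carrier_mat m m"
    and Me: "\<And>x y. x < m \<Longrightarrow> y < m \<Longrightarrow> M $$ (x, y) = (\<Sum>j<K. of_real (r j) * F j $$ (x, y))"
  shows "mtrace (E * M) = (\<Sum>j<K. of_real (r j) * mtrace (E * F j))"
proof -
  have "mtrace (E * M) = (\<Sum>x<m. \<Sum>y<m. E $$ (x, y) * M $$ (y, x))" by (rule mtrace_mult[OF Ec Mc])
  also have "\<dots> = (\<Sum>x<m. \<Sum>y<m. \<Sum>j<K. of_real (r j) * (E $$ (x, y) * F j $$ (y, x)))"
    by (intro sum.cong refl) (simp add: Me sum_distrib_left mult_ac)
  also have "\<dots> = (\<Sum>x<m. \<Sum>j<K. \<Sum>y<m. of_real (r j) * (E $$ (x, y) * F j $$ (y, x)))"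
    by (intro sum.cong refl sum.swap)
  also have "\<dots> = (\<Sum>j<K. \<Sum>x<m. \<Sum>y<m. of_real (r j) * (E $$ (x, y) * F j $$ (y, x)))"
    by (rule sum.swap)
  also have "\<dots> = (\<Sum>j<K. of_real (r j) * mtrace (E * F j))"
  proof (rule sum.cong[OF refl])
    fix j assume "j \<in> {..<K}"
    then have "F j \<in> carrier_mat m m" using Fc by simp
    then show "(\<Sum>x<m. \<Sum>y<m. of_real (r j) * (E $$ (x, y) * F j $$ (y, x))) = of_real (r j) * mtrace (E * F j)"
      using Ec by (simp add: mtrace_mult sum_distrib_left)
  qed
  finally show ?thesis .
qed

lemma qc_parts: "quantum_channel n \<Phi> \<Longrightarrow> linear_map_on (2 ^ n) \<Phi> \<and> completely_positive (2 ^ n) \<Phi> \<and> trace_preserving (2 ^ n) \<Phi>"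
  by (simp add: quantum_channel_def)

lemma mixture_trace:
  assumes Ec: "E \<in> carrier_mat (d * d) (d * d)" and ch: "\<And>j. j < K \<Longrightarrow> linear_map_on d (Ns j)"
  shows "Re (mtrace (E * mixture_choi d K Ns p)) = (\<Sum>j<K. p j * Re (mtrace (E * choi d (Ns j))))"
proof -
  have Cc: "choi d (Ns j) \<in> carrier_mat (d * d) (d * d)" if "j < K" for j
    using choi_props(1)[of d "Ns j"] lin_ketbra[OF ch[OF that]] by blast
  have all: "\<forall>x\<in>set [0..<K]. complex_of_real (p x) \<cdot>\<^sub>m choi d (Ns x) \<in> carrier_mat (d * d) (d * d)"
    using Cc by auto
  have "mtrace (E * mixture_choi d K Ns p) = (\<Sum>j<K. of_real (p j) * mtrace (E * choi d (Ns j)))"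
  proof (rule trace_lincomb[OF Ec])
    show "mixture_choi d K Ns p \<in> carrier_mat (d * d) (d * d)"
      unfolding mixture_choi_def by (rule msum_carrier[OF all])
    show "\<And>j. j < K \<Longrightarrow> choi d (Ns j) \<in> carrier_mat (d * d) (d * d)" by (rule Cc)
    fix x y assume xy: "x < d * d" "y < d * d"
    have "mixture_choi d K Ns p $$ (x, y) = (\<Sum>j\<leftarrow>[0..<K]. (complex_of_real (p j) \<cdot>\<^sub>m choi d (Ns j)) $$ (x, y))"
      unfolding mixture_choi_def by (rule msum_index[OF all xy])
    also have "\<dots> = (\<Sum>j<K. (complex_of_real (p j) \<cdot>\<^sub>m choi d (Ns j)) $$ (x, y))"
      by (rule sum_list_upt_sum)
    also have "\<dots> = (\<Sum>j<K. of_real (p j) * choi d (Ns j) $$ (x, y))"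
    proof (rule sum.cong[OF refl])
      fix j assume "j \<in> {..<K}"
      then have cj: "choi d (Ns j) \<in> carrier_mat (d * d) (d * d)" using Cc by simp
      show "(complex_of_real (p j) \<cdot>\<^sub>m choi d (Ns j)) $$ (x, y) = of_real (p j) * choi d (Ns j) $$ (x, y)"
        using carrier_matD[OF cj] xy by simp
    qed
    finally show "mixture_choi d K Ns p $$ (x, y) = (\<Sum>j<K. of_real (p j) * choi d (Ns j) $$ (x, y))" .
  qed
  then show ?thesis by (simp add: Re_sum)
qed

lemma hull_trace:
  assumes Ec: "E \<in> carrier_mat (d * d) (d * d)" and ch: "\<And>j. j < K \<Longrightarrow> linear_map_on d (Ns j)"
    and q: "prob_vec K q"
    and hull: "\<forall>X \<in> carrier_mat d d. \<Phi> X = msum d (\<lambda>j. complex_of_real (q j) \<cdot>\<^sub>m Ns j X) [0..<K]"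
  shows "Re (mtrace (E * choi d \<Phi>)) = (\<Sum>j<K. q j * Re (mtrace (E * choi d (Ns j))))"
proof -
  have Cc: "choi d (Ns j) \<in> carrier_mat (d * d) (d * d)" if "j < K" for j
    using choi_props(1)[of d "Ns j"] lin_ketbra[OF ch[OF that]] by blast
  have allk: "\<forall>x\<in>set [0..<K]. complex_of_real (q x) \<cdot>\<^sub>m Ns x (ketbra d i j) \<in> carrier_mat d d"
    if "i < d" "j < d" for i j
    using that by (auto intro!: smult_carrier_mat lin_ketbra[OF ch])
  have ck: "\<Phi> (ketbra d i j) \<in> carrier_mat d d" if "i < d" "j < d" for i j
    using hull ketbra_carrier msum_carrier[OF allk[OF that]] by auto
  have "mtrace (E * choi d \<Phi>) = (\<Sum>j<K. of_real (q j) * mtrace (E * choi d (Ns j)))"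
  proof (rule trace_lincomb[OF Ec])
    show "choi d \<Phi> \<in> carrier_mat (d * d) (d * d)" by (rule choi_props(1)[of d \<Phi>, OF ck])
    show "\<And>j. j < K \<Longrightarrow> choi d (Ns j) \<in> carrier_mat (d * d) (d * d)" by (rule Cc)
    fix x y assume xy: "x < d * d" "y < d * d"
    have dd: "x div d < d" "y div d < d" "x mod d < d" "y mod d < d"
      using xy div_lt_sq mod_lt_sq by auto
    have "choi d \<Phi> $$ (x, y) = \<Phi> (ketbra d (x div d) (y div d)) $$ (x mod d, y mod d)"
      by (rule choi_props(2)[of d \<Phi>, OF ck xy])
    also have "\<dots> = msum d (\<lambda>j. complex_of_real (q j) \<cdot>\<^sub>m Ns j (ketbra d (x div d) (y div d))) [0..<K]
                     $$ (x mod d, y mod d)"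
      using hull ketbra_carrier by simp
    also have "\<dots> = (\<Sum>j\<leftarrow>[0..<K]. (complex_of_real (q j) \<cdot>\<^sub>m Ns j (ketbra d (x div d) (y div d)))
                     $$ (x mod d, y mod d))"
      by (rule msum_index[OF allk[OF dd(1,2)] dd(3,4)])
    also have "\<dots> = (\<Sum>j<K. (complex_of_real (q j) \<cdot>\<^sub>m Ns j (ketbra d (x div d) (y div d)))
                     $$ (x mod d, y mod d))"
      by (rule sum_list_upt_sum)
    also have "\<dots> = (\<Sum>j<K. of_real (q j) * choi d (Ns j) $$ (x, y))"
    proof (rule sum.cong[OF refl])
      fix j assume "j \<in> {..<K}"
      then have j: "j < K" by simp
      have nc: "Ns j (ketbra d (x div d) (y div d)) \<in> carrier_mat d d" using lin_ketbra[OF ch[OF j] dd(1,2)] .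
      have "choi d (Ns j) $$ (x, y) = Ns j (ketbra d (x div d) (y div d)) $$ (x mod d, y mod d)"
        using choi_props(2)[of d "Ns j", OF lin_ketbra[OF ch[OF j]] xy] by blast
      then show "(complex_of_real (q j) \<cdot>\<^sub>m Ns j (ketbra d (x div d) (y div d))) $$ (x mod d, y mod d)
          = of_real (q j) * choi d (Ns j) $$ (x, y)" using nc dd by simp
    qed
    finally show "choi d \<Phi> $$ (x, y) = (\<Sum>j<K. of_real (q j) * choi d (Ns j) $$ (x, y))" .
  qed
  then show ?thesis by (simp add: Re_sum)
qed


lemma sum_shift1: "(\<Sum>t=1..T. g t) = (\<Sum>r<T. g (Suc r))" for g :: "nat \<Rightarrow> real"
  by (induction T) (auto simp: atLeastAtMostSuc_conv)

lemma hist_shift: "map (\<lambda>s. (E s, b s)) [1..<Suc r] = map (\<lambda>s. (E (Suc s), b (Suc s))) [0..<r]"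
proof -
  have "[1..<Suc r] = map Suc [0..<r]" by (simp add: map_Suc_upt)
  then show ?thesis by simp
qed

theorem corollary3p6:
  "\<exists>C::real. \<forall>(n::nat) (K::nat) (Ns :: nat \<Rightarrow> complex mat \<Rightarrow> complex mat)
      (loss :: real \<Rightarrow> real) (L::real) (T::nat).
     0 < K \<longrightarrow> (\<forall>j<K. quantum_channel n (Ns j)) \<longrightarrow>
     convex_on {-1..1} loss \<longrightarrow> L-lipschitz_on {-1..1} loss \<longrightarrow>
     (\<exists>strat :: (complex mat \<times> real) list \<Rightarrow> nat \<Rightarrow> real.
        (\<forall>h. prob_vec K (strat h)) \<and>
        (\<forall>(E :: nat \<Rightarrow> complex mat) (b :: nat \<Rightarrow> real).
           (\<forall>t\<in>{1..T}. channel_test_op (2 ^ n) (E t) \<and> 0 \<le> b t \<and> b t \<le> 1) \<longrightarrow>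
           (\<forall>\<Phi>. in_channel_hull (2 ^ n) K Ns \<Phi> \<longrightarrow>
              (\<Sum>t=1..T. loss (Re (mtrace (E t * mixture_choi (2 ^ n) K Ns
                                   (strat (map (\<lambda>s. (E s, b s)) [1..<t])))) - b t))
              - (\<Sum>t=1..T. loss (Re (mtrace (E t * choi (2 ^ n) \<Phi>)) - b t))
              \<le> C * L * sqrt (real T * ln (real K)))))"
proof (rule exI[of _ 2], intro allI impI)
  fix n K :: nat and Ns :: "nat \<Rightarrow> complex mat \<Rightarrow> complex mat" and loss :: "real \<Rightarrow> real"
    and L :: real and T :: nat
  assume K: "0 < K" and ch: "\<forall>j<K. quantum_channel n (Ns j)"
    and cvx: "convex_on {-1..1} loss" and lip: "L-lipschitz_on {-1..1} loss"
  define d where "d = (2::nat) ^ n"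
  define A where "A E j = Re (mtrace (E * choi d (Ns j)))" for E j
  define \<eta> where "\<eta> = sqrt (ln (real K) / real T) / L"
  define strat where "strat h = hw K \<eta> (hS K \<eta> loss L A h)" for h
  have L0: "0 \<le> L" using lip by (simp add: lipschitz_on_def)
  have lin: "\<And>j. j < K \<Longrightarrow> linear_map_on d (Ns j)"
    and cpj: "\<And>j. j < K \<Longrightarrow> completely_positive d (Ns j)"
    and tpj: "\<And>j. j < K \<Longrightarrow> trace_preserving d (Ns j)"
    using ch by (auto simp: quantum_channel_def d_def)
  show "\<exists>strat :: (complex mat \<times> real) list \<Rightarrow> nat \<Rightarrow> real.
        (\<forall>h. prob_vec K (strat h)) \<and>
        (\<forall>(E :: nat \<Rightarrow> complex mat) (b :: nat \<Rightarrow> real).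
           (\<forall>t\<in>{1..T}. channel_test_op (2 ^ n) (E t) \<and> 0 \<le> b t \<and> b t \<le> 1) \<longrightarrow>
           (\<forall>\<Phi>. in_channel_hull (2 ^ n) K Ns \<Phi> \<longrightarrow>
              (\<Sum>t=1..T. loss (Re (mtrace (E t * mixture_choi (2 ^ n) K Ns
                                   (strat (map (\<lambda>s. (E s, b s)) [1..<t])))) - b t))
              - (\<Sum>t=1..T. loss (Re (mtrace (E t * choi (2 ^ n) \<Phi>)) - b t))
              \<le> 2 * L * sqrt (real T * ln (real K))))"
  proof (rule exI[of _ strat], intro conjI allI impI)
    fix h show "prob_vec K (strat h)" unfolding strat_def by (rule hw_prob[OF K])
  next
    fix E :: "nat \<Rightarrow> complex mat" and b :: "nat \<Rightarrow> real" and \<Phi>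
    assume hyp: "\<forall>t\<in>{1..T}. channel_test_op (2 ^ n) (E t) \<and> 0 \<le> b t \<and> b t \<le> 1"
      and hull: "in_channel_hull (2 ^ n) K Ns \<Phi>"
    obtain q where q: "prob_vec K q"
      and qh: "\<forall>X \<in> carrier_mat d d. \<Phi> X = msum d (\<lambda>j. complex_of_real (q j) \<cdot>\<^sub>m Ns j X) [0..<K]"
      using hull by (auto simp: in_channel_hull_def d_def)
    define e where "e r = E (Suc r)" for r
    define bb where "bb r = b (Suc r)" for r
    have eT: "channel_test_op d (e r)" "0 \<le> bb r \<and> bb r \<le> 1" if "r < T" for r
      using hyp that by (auto simp: e_def bb_def d_def)
    have ec: "e r \<in> carrier_mat (d * d) (d * d)" if "r < T" for r
      using eT(1)[OF that] by (simp add: channel_test_op_def psd_def)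
    have a01: "0 \<le> A (e r) j \<and> A (e r) j \<le> 1" if "r < T" "j < K" for r j
      unfolding A_def using choi_trace_01[OF eT(1)[OF that(1)] lin cpj tpj] that(2) by blast
    define P where "P r = strat (map (\<lambda>s. (e s, bb s)) [0..<r])" for r
    have Pp: "prob_vec K (P r)" for r unfolding P_def strat_def by (rule hw_prob[OF K])
    have lhs: "(\<Sum>t=1..T. loss (Re (mtrace (E t * mixture_choi (2 ^ n) K Ns
                                   (strat (map (\<lambda>s. (E s, b s)) [1..<t])))) - b t))
        = (\<Sum>r<T. loss ((\<Sum>j<K. P r j * A (e r) j) - bb r))"
      unfolding sum_shift1
    proof (rule sum.cong[OF refl])
      fix r assume "r \<in> {..<T}"
      then have r: "r < T" by simp
      have "Re (mtrace (E (Suc r) * mixture_choi d K Ns (P r))) = (\<Sum>j<K. P r j * A (e r) j)"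
        unfolding A_def e_def using mixture_trace[OF ec[OF r, unfolded e_def] lin] by simp
      then show "loss (Re (mtrace (E (Suc r) * mixture_choi (2 ^ n) K Ns
                     (strat (map (\<lambda>s. (E s, b s)) [1..<Suc r])))) - b (Suc r))
          = loss ((\<Sum>j<K. P r j * A (e r) j) - bb r)"
        unfolding hist_shift by (simp add: P_def e_def bb_def d_def)
    qed
    have rhs: "(\<Sum>t=1..T. loss (Re (mtrace (E t * choi (2 ^ n) \<Phi>)) - b t))
        = (\<Sum>r<T. loss ((\<Sum>j<K. q j * A (e r) j) - bb r))"
      unfolding sum_shift1
    proof (rule sum.cong[OF refl])
      fix r assume "r \<in> {..<T}"
      then have r: "r < T" by simp
      have "Re (mtrace (E (Suc r) * choi d \<Phi>)) = (\<Sum>j<K. q j * A (e r) j)"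
        unfolding A_def e_def using hull_trace[OF ec[OF r, unfolded e_def] lin q qh] by simp
      then show "loss (Re (mtrace (E (Suc r) * choi (2 ^ n) \<Phi>)) - b (Suc r))
          = loss ((\<Sum>j<K. q j * A (e r) j) - bb r)"
        by (simp add: bb_def d_def)
    qed
    define R where "R = (\<Sum>r<T. loss ((\<Sum>j<K. P r j * A (e r) j) - bb r))
                      - (\<Sum>r<T. loss ((\<Sum>j<K. q j * A (e r) j) - bb r))"
    have "R \<le> 2 * L * sqrt (real T * ln (real K))"
    proof (cases "K = 1")
      case True
      have "P r 0 = 1" "q 0 = 1" for r using Pp[of r] q True by (simp_all add: prob_vec_def)
      then have "R = 0" unfolding R_def using True by simp
      then show ?thesis using True by simp
    next
      case False
      then have K2: "2 \<le> K" using K by simp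
      have lnK: "0 < ln (real K)" using K2 by simp
      have triv: "R \<le> L * T" unfolding R_def
        by (rule trivial_regret[OF lip Pp q]) (use a01 eT(2) in auto)
      show ?thesis
      proof (cases "L = 0 \<or> real T \<le> ln (real K)")
        case True
        have "L * T \<le> 2 * L * sqrt (real T * ln (real K))"
        proof (cases "L = 0")
          case True then show ?thesis by simp
        next
          case False
          with \<open>L = 0 \<or> real T \<le> ln (real K)\<close> have TK: "real T \<le> ln (real K)" by simp
          have "real T = sqrt (real T * real T)" by simp
          also have "\<dots> \<le> sqrt (real T * ln (real K))"
            using TK by (intro real_sqrt_le_mono mult_left_mono) auto
          finally have "real T \<le> sqrt (real T * ln (real K))" .
          then have "L * T \<le> L * sqrt (real T * ln (real K))" using L0 by (intro mult_left_mono) auto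
          also have "\<dots> \<le> 2 * L * sqrt (real T * ln (real K))"
          proof -
            have "0 \<le> L * sqrt (real T * ln (real K))" using L0 lnK by simp
            then show ?thesis by simp
          qed
          finally show ?thesis .
        qed
        then show ?thesis using triv by linarith
      next
        case False
        then have Lp: "0 < L" and TK: "ln (real K) < real T" using L0 by auto
        then have Tp: "0 < real T" using lnK by linarith
        define u where "u = sqrt (ln (real K))"
        define v where "v = sqrt (real T)"
        have up: "0 < u" and vp: "0 < v" using lnK Tp by (auto simp: u_def v_def)
        have uu: "u * u = ln (real K)" and vv: "v * v = real T" using lnK Tp by (auto simp: u_def v_def)
        have eta: "\<eta> = u / (v * L)" by (simp add: \<eta>_def u_def v_def real_sqrt_divide)
        have etap: "0 < \<eta>" using up vp Lp by (simp add: eta)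
        have "u < v" using TK lnK by (simp add: u_def v_def)
        then have "\<eta> * L \<le> 1" using vp Lp by (simp add: eta)
        have hr: "R \<le> ln (real K) / \<eta> + \<eta> * real T * L\<^sup>2"
          unfolding R_def P_def strat_def
          by (rule hedge_regret[OF K cvx lip _ _ q etap \<open>\<eta> * L \<le> 1\<close>]) (use a01 eT(2) in auto)
        have "ln (real K) / \<eta> + \<eta> * real T * L\<^sup>2 = 2 * L * (v * u)"
          unfolding eta uu[symmetric] vv[symmetric] using up vp Lp
          by (simp add: field_simps power2_eq_square)
        also have "v * u = sqrt (real T * ln (real K))" by (simp add: u_def v_def real_sqrt_mult)
        finally show ?thesis using hr by simp
      qed
    qed
    then show "(\<Sum>t=1..T. loss (Re (mtrace (E t * mixture_choi (2 ^ n) K Ns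
                                   (strat (map (\<lambda>s. (E s, b s)) [1..<t])))) - b t))
              - (\<Sum>t=1..T. loss (Re (mtrace (E t * choi (2 ^ n) \<Phi>)) - b t))
              \<le> 2 * L * sqrt (real T * ln (real K))"
      unfolding lhs rhs R_def .
  qed
qed


end
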